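(* Let $\mathcal{T}=[0,T_{max}]$, $\mathcal{T}_d,\mathcal{T}_a\subseteq\mathcal{T}$ compact, $\mathcal{X}=[X_{min},X_{max}]$ with $0\le X_{min}<X_{max}$, $m$ a probability measure on $\mathcal{X}\times\mathcal{T}_a$, $G>0$, and let $V:\mathbb{R}^+\to\mathbb{R}^+$ be a strictly decreasing Lipschitz continuous speed function. For $F\in\mathcal{P}_{m,G}$ let $z_F\in\mathcal{C}(\mathcal{T})$ denote the unique solution of $z_F(t)=\int_0^t V\big(F(S_s(z_F))\big)\,ds$, $t\in\mathcal{T}$. If $(F_k)_{k\in\mathbb{N}}\subseteq\mathcal{P}_{m,G}$ converges weakly to $F$ (so that $F\in\mathcal{P}_{m,G}$), then $z_{F_k}\to z_F$ uniformly on $\mathcal{T}$.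
   Context: $\mathcal{C}(\mathcal{T})$ denotes the space of real-valued continuous functions on $\mathcal{T}$ with the uniform norm. $\lambda_2$ denotes Lebesgue measure on $\mathbb{R}^2$. $\mathcal{P}_{m,G}$ is the set of all Borel probability measures $F$ on $\mathcal{T}_d\times\mathcal{X}$ such that (i) $F(B)\le G\,\lambda_2(B)$ for every Borel set $B\subseteq\mathcal{T}_d\times\mathcal{X}$, and (ii) $F(\mathcal{T}_d\times B)=m(B\times\mathcal{T}_a)$ for every Borel set $B\subseteq\mathcal{X}$. For $z\in\mathcal{C}(\mathcal{T})$ and $t\in\mathcal{T}$, $S_t(z):=\{(\tau,\xi)\,:\,\tau\in[0,t]\cap\mathcal{T}_d,\ \xi\in(z(t)-z(\tau),\infty)\cap\mathcal{X}\}$. *)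

theory Defs
  imports "HOL-Probability.Probability"
begin

text \<open>Borel probability measures on the plane are modelled as measures on
  the type real \<times> real with the Borel sigma-algebra; the first component is the
  time coordinate tau (in T_d), the second the space coordinate xi (in X).\<close>

definition P_mG ::
  "real set \<Rightarrow> real set \<Rightarrow> real set \<Rightarrow> (real \<times> real) measure \<Rightarrow> real \<Rightarrow> (real \<times> real) measure set"
  where "P_mG Td Ta X m G = {F.
     prob_space F \<and> sets F = sets borel \<and> emeasure F (Td \<times> X) = 1 \<and>
     (\<forall>B\<in>sets borel. B \<subseteq> Td \<times> X \<longrightarrow>
         emeasure F B \<le> ennreal G * emeasure lborel B) \<and>
     (\<forall>B\<in>sets borel. B \<subseteq> X \<longrightarrow> emeasure F (Td \<times> B) = emeasure m (B \<times> Ta))}"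

definition S_set :: "real set \<Rightarrow> real set \<Rightarrow> real \<Rightarrow> (real \<Rightarrow> real) \<Rightarrow> (real \<times> real) set"
  where "S_set Td X t z = {(\<tau>, \<xi>). \<tau> \<in> {0..t} \<inter> Td \<and> \<xi> \<in> {z t - z \<tau> <..} \<inter> X}"

definition weak_conv_plane :: "(nat \<Rightarrow> (real \<times> real) measure) \<Rightarrow> (real \<times> real) measure \<Rightarrow> bool"
  where "weak_conv_plane Fs F \<longleftrightarrow>
    (\<forall>f :: real \<times> real \<Rightarrow> real. continuous_on UNIV f \<longrightarrow> bounded (range f) \<longrightarrow>
       (\<lambda>k. integral\<^sup>L (Fs k) f) \<longlonglongrightarrow> integral\<^sup>L F f)"

definition solves_eq :: "real \<Rightarrow> real set \<Rightarrow> real set \<Rightarrow> (real \<Rightarrow> real) \<Rightarrow>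
    (real \<times> real) measure \<Rightarrow> (real \<Rightarrow> real) \<Rightarrow> bool"
  where "solves_eq Tmax Td X V F z \<longleftrightarrow>
    continuous_on {0..Tmax} z \<and>
    (\<forall>t\<in>{0..Tmax}. ((\<lambda>s. V (measure F (S_set Td X s z))) has_integral z t) {0..t})"

end

theory Submission
  imports Defs
begin


lemma lborel_band:
  fixes B :: "(real \<times> real) set"
  assumes B: "B \<in> sets borel" and sub: "B \<subseteq> {a..b} \<times> UNIV" and ab: "a \<le> b" and w: "0 \<le> w"
    and fib: "\<And>\<tau>. \<exists>l. {\<xi>. (\<tau>,\<xi>) \<in> B} \<subseteq> {l..l+w}"
  shows "emeasure lborel B \<le> ennreal ((b-a)*w)"
proof -
  have Bs: "B \<in> sets (lborel \<Otimes>\<^sub>M (lborel :: real measure))"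
    using B by (simp only: lborel_prod sets_lborel)
  have "emeasure lborel B = emeasure (lborel \<Otimes>\<^sub>M (lborel :: real measure)) B"
    by (simp add: lborel_prod)
  also have "\<dots> = (\<integral>\<^sup>+x. emeasure lborel (Pair x -` B) \<partial>lborel)"
    by (rule sigma_finite_measure.emeasure_pair_measure_alt[OF sigma_finite_lborel Bs])
  also have "\<dots> \<le> (\<integral>\<^sup>+x. ennreal w * indicator {a..b} x \<partial>lborel)"
  proof (rule nn_integral_mono)
    fix x
    show "emeasure lborel (Pair x -` B) \<le> ennreal w * indicator {a..b} x"
    proof (cases "x \<in> {a..b}")
      case True
      obtain l where l: "{\<xi>. (x,\<xi>) \<in> B} \<subseteq> {l..l+w}" using fib by blast
      have "emeasure lborel (Pair x -` B) \<le> emeasure lborel {l..l+w}"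
        by (rule emeasure_mono) (use l in \<open>auto simp: vimage_def\<close>)
      also have "\<dots> = ennreal w" using w by simp
      finally show ?thesis using True by simp
    next
      case False
      then have "Pair x -` B = {}" using sub by auto
      then show ?thesis by simp
    qed
  qed
  also have "\<dots> = ennreal w * ennreal (b - a)"
    using ab by (simp add: nn_integral_cmult)
  also have "\<dots> = ennreal ((b-a)*w)" using w ab by (simp add: ennreal_mult' mult.commute)
  finally show ?thesis .
qed



definition Qset :: "real set \<Rightarrow> real set \<Rightarrow> real \<Rightarrow> (real \<Rightarrow> real) \<Rightarrow> (real \<times> real) set"
  where "Qset Td X s c = {(\<tau>, \<xi>). \<tau> \<in> {0..s} \<inter> Td \<and> \<xi> \<in> X \<and> c \<tau> < \<xi>}"

lemma P_basic:
  assumes "F \<in> P_mG Td Ta X m G"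
  shows "prob_space F" "sets F = sets borel" "space F = UNIV" "emeasure F (Td \<times> X) = 1"
  using assms unfolding P_mG_def by (auto dest: sets_eq_imp_space_eq)

lemma P_restrict:
  assumes F: "F \<in> P_mG Td Ta X m G" and D: "Td \<times> X \<in> sets borel" and B: "B \<in> sets borel"
  shows "measure F B = measure F (B \<inter> (Td \<times> X))"
proof -
  interpret prob_space F using P_basic[OF F] by simp
  have "prob (Td \<times> X) = 1" using P_basic(4)[OF F] by (simp add: measure_def)
  then have "AE x in F. x \<in> Td \<times> X" by (rule AE_prob_1)
  then have "emeasure F B = emeasure F (B \<inter> (Td \<times> X))"
    by (intro emeasure_eq_AE) (use B D P_basic(2)[OF F] in auto)
  then show ?thesis by (simp add: measure_def)
qed

lemma P_bound:
  assumes F: "F \<in> P_mG Td Ta X m G" and G: "0 \<le> G"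
    and B: "B \<in> sets borel" and BD: "B \<subseteq> Td \<times> X" and sub: "B \<subseteq> {a..b} \<times> UNIV"
    and ab: "a \<le> b" and w: "0 \<le> w"
    and fib: "\<And>\<tau>. \<exists>l. {\<xi>. (\<tau>,\<xi>) \<in> B} \<subseteq> {l..l+w}"
  shows "measure F B \<le> G * ((b-a)*w)"
proof -
  have "emeasure F B \<le> ennreal G * emeasure lborel B"
    using F B BD unfolding P_mG_def by auto
  also have "\<dots> \<le> ennreal G * ennreal ((b-a)*w)"
    by (intro mult_left_mono lborel_band[OF B sub ab w fib]) auto
  also have "\<dots> = ennreal (G * ((b-a)*w))" using G ab w by (simp add: ennreal_mult)
  finally have "emeasure F B \<le> ennreal (G * ((b-a)*w))" .
  then have "enn2real (emeasure F B) \<le> enn2real (ennreal (G * ((b-a)*w)))"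
    by (rule enn2real_mono) simp
  then show ?thesis unfolding measure_def using G ab w by simp
qed

lemma Q_borel:
  assumes "closed Td" "closed X" "continuous_on UNIV c"
  shows "Qset Td X s c \<in> sets borel"
proof -
  have "Qset Td X s c = (({0..s} \<inter> Td) \<times> X) \<inter> {x. c (fst x) < snd x}"
    unfolding Qset_def by auto
  moreover have "closed (({0..s} \<inter> Td) \<times> X)" using assms by (intro closed_Times closed_Int) auto
  moreover have "open {x. c (fst x) < snd x}"
    by (intro open_Collect_less continuous_intros continuous_on_compose2[OF assms(3)]) auto
  ultimately show ?thesis by auto
qed

lemma Q_sub: "Qset Td X s c \<subseteq> Td \<times> X" unfolding Qset_def by auto

lemma Q_lip1:
  assumes F: "F \<in> P_mG Td Ta X m G" and G: "0 \<le> G"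
    and cl: "closed Td" "closed X" and c1: "continuous_on UNIV c1" and c2: "continuous_on UNIV c2"
    and s: "0 \<le> s" and eta: "0 \<le> \<eta>" and d: "\<And>\<tau>. \<tau> \<in> {0..s} \<Longrightarrow> \<bar>c1 \<tau> - c2 \<tau>\<bar> \<le> \<eta>"
  shows "measure F (Qset Td X s c1) \<le> measure F (Qset Td X s c2) + G * (s * \<eta>)"
proof -
  interpret prob_space F using P_basic[OF F] by simp
  let ?Q1 = "Qset Td X s c1" and ?Q2 = "Qset Td X s c2"
  have b1: "?Q1 \<in> sets borel" and b2: "?Q2 \<in> sets borel" using Q_borel cl c1 c2 by auto
  have e1: "?Q1 \<in> events" and e2: "?Q2 \<in> events" using b1 b2 P_basic(2)[OF F] by auto
  have "measure F ?Q1 \<le> measure F ((?Q1 - ?Q2) \<union> ?Q2)"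
    by (rule finite_measure_mono) (use e1 e2 in auto)
  also have "\<dots> \<le> measure F (?Q1 - ?Q2) + measure F ?Q2"
    by (rule measure_subadditive) (use e1 e2 in auto)
  also have "measure F (?Q1 - ?Q2) \<le> G * ((s - 0) * \<eta>)"
  proof (rule P_bound[OF F G])
    show "?Q1 - ?Q2 \<in> sets borel" using b1 b2 by auto
    show "?Q1 - ?Q2 \<subseteq> Td \<times> X" using Q_sub by blast
    show "?Q1 - ?Q2 \<subseteq> {0..s} \<times> UNIV" unfolding Qset_def by auto
    fix \<tau>
    show "\<exists>l. {\<xi>. (\<tau>, \<xi>) \<in> ?Q1 - ?Q2} \<subseteq> {l..l + \<eta>}"
    proof (intro exI subsetI)
      fix \<xi> assume "\<xi> \<in> {\<xi>. (\<tau>, \<xi>) \<in> ?Q1 - ?Q2}"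
      then have "\<tau> \<in> {0..s}" "c1 \<tau> < \<xi>" "\<xi> \<le> c2 \<tau>" unfolding Qset_def by auto
      with d[of \<tau>] show "\<xi> \<in> {c2 \<tau> - \<eta>..c2 \<tau> - \<eta> + \<eta>}" by auto
    qed
  qed (use s eta in auto)
  finally show ?thesis by simp
qed

lemma Q_lip:
  assumes F: "F \<in> P_mG Td Ta X m G" and G: "0 \<le> G"
    and cl: "closed Td" "closed X" and c1: "continuous_on UNIV c1" and c2: "continuous_on UNIV c2"
    and s: "0 \<le> s" and eta: "0 \<le> \<eta>" and d: "\<And>\<tau>. \<tau> \<in> {0..s} \<Longrightarrow> \<bar>c1 \<tau> - c2 \<tau>\<bar> \<le> \<eta>"
  shows "\<bar>measure F (Qset Td X s c1) - measure F (Qset Td X s c2)\<bar> \<le> G * (s * \<eta>)"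
proof -
  have "\<And>\<tau>. \<tau> \<in> {0..s} \<Longrightarrow> \<bar>c2 \<tau> - c1 \<tau>\<bar> \<le> \<eta>" using d by (simp add: abs_minus_commute)
  then show ?thesis using Q_lip1[OF F G cl c1 c2 s eta d] Q_lip1[OF F G cl c2 c1 s eta]
    by (simp add: abs_le_iff)
qed

lemma Q_mono_s:
  assumes F: "F \<in> P_mG Td Ta {Xmin..Xmax} m G" and G: "0 \<le> G" and X: "Xmin \<le> Xmax"
    and cl: "closed Td" and c: "continuous_on UNIV c" and s: "0 \<le> s" "s \<le> s'"
  shows "measure F (Qset Td {Xmin..Xmax} s c) \<le> measure F (Qset Td {Xmin..Xmax} s' c)"
    "measure F (Qset Td {Xmin..Xmax} s' c) \<le> measure F (Qset Td {Xmin..Xmax} s c) + G * ((s' - s) * (Xmax - Xmin))"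
proof -
  interpret prob_space F using P_basic[OF F] by simp
  let ?Q1 = "Qset Td {Xmin..Xmax} s c" and ?Q2 = "Qset Td {Xmin..Xmax} s' c"
  have b1: "?Q1 \<in> sets borel" and b2: "?Q2 \<in> sets borel" using Q_borel cl c by auto
  have e1: "?Q1 \<in> events" and e2: "?Q2 \<in> events" using b1 b2 P_basic(2)[OF F] by auto
  have sub: "?Q1 \<subseteq> ?Q2" using s unfolding Qset_def by auto
  show "measure F ?Q1 \<le> measure F ?Q2" by (rule finite_measure_mono[OF sub e2])
  have "measure F ?Q2 \<le> measure F ((?Q2 - ?Q1) \<union> ?Q1)"
    by (rule finite_measure_mono) (use e1 e2 in auto)
  also have "\<dots> \<le> measure F (?Q2 - ?Q1) + measure F ?Q1"
    by (rule measure_subadditive) (use e1 e2 in auto)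
  also have "measure F (?Q2 - ?Q1) \<le> G * ((s' - s) * (Xmax - Xmin))"
  proof (rule P_bound[OF F G])
    show "?Q2 - ?Q1 \<in> sets borel" using b1 b2 by auto
    show "?Q2 - ?Q1 \<subseteq> Td \<times> {Xmin..Xmax}" using Q_sub by blast
    show "?Q2 - ?Q1 \<subseteq> {s..s'} \<times> UNIV" unfolding Qset_def by auto
    fix \<tau>
    show "\<exists>l. {\<xi>. (\<tau>, \<xi>) \<in> ?Q2 - ?Q1} \<subseteq> {l..l + (Xmax - Xmin)}"
      by (rule exI[of _ Xmin]) (auto simp: Qset_def)
  qed (use s X in auto)
  finally show "measure F ?Q2 \<le> measure F ?Q1 + G * ((s' - s) * (Xmax - Xmin))" by simp
qed



definition rampf :: "real \<Rightarrow> real \<Rightarrow> real" where "rampf d x = min 1 (max 0 (inverse d * x))"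

definition fplusQ :: "real \<Rightarrow> real \<Rightarrow> (real \<Rightarrow> real) \<Rightarrow> real \<times> real \<Rightarrow> real"
  where "fplusQ d s c = (\<lambda>x. rampf d (s + d - fst x) * rampf d (snd x - c (fst x) + d))"
definition fminusQ :: "real \<Rightarrow> real \<Rightarrow> (real \<Rightarrow> real) \<Rightarrow> real \<times> real \<Rightarrow> real"
  where "fminusQ d s c = (\<lambda>x. rampf d (s - fst x) * rampf d (snd x - c (fst x) - d))"

lemma rampf_cont: "continuous_on UNIV (rampf d)"
  unfolding rampf_def by (intro continuous_intros)

lemma rampf_bounds: "0 \<le> rampf d x" "rampf d x \<le> 1" unfolding rampf_def by auto

lemma rampf_1: "0 < d \<Longrightarrow> d \<le> x \<Longrightarrow> rampf d x = 1" unfolding rampf_def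
  by (auto simp: field_simps)
lemma rampf_0: "0 < d \<Longrightarrow> x \<le> 0 \<Longrightarrow> rampf d x = 0" unfolding rampf_def
  by (auto simp: mult_nonneg_nonpos)
lemma rampf_pos: "0 < d \<Longrightarrow> 0 < rampf d x \<Longrightarrow> 0 < x"
  using rampf_0[of d x] by force

lemma fpm_cont:
  assumes "continuous_on UNIV c"
  shows "continuous_on UNIV (fplusQ d s c)" "continuous_on UNIV (fminusQ d s c)"
  unfolding fplusQ_def fminusQ_def
  by (intro continuous_intros continuous_on_compose2[OF rampf_cont] continuous_on_compose2[OF assms]; simp)+

lemma fpm_bounds: "\<bar>fplusQ d s c x\<bar> \<le> 1" "\<bar>fminusQ d s c x\<bar> \<le> 1"
  "0 \<le> fplusQ d s c x" "0 \<le> fminusQ d s c x"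
  unfolding fplusQ_def fminusQ_def using rampf_bounds
  by (auto simp: abs_mult intro!: mult_le_one)

lemma P_integrable:
  assumes F: "F \<in> P_mG Td Ta X m G" and f: "continuous_on UNIV f" and b: "\<And>x. \<bar>f x\<bar> \<le> (1::real)"
  shows "integrable F f"
proof -
  interpret prob_space F using P_basic[OF F] by simp
  have e: "F \<rightarrow>\<^sub>M (borel :: real measure) = borel \<rightarrow>\<^sub>M borel"
    by (rule measurable_cong_sets[OF P_basic(2)[OF F] refl])
  have m: "f \<in> borel_measurable F"
    unfolding e by (rule borel_measurable_continuous_onI[OF f])
  have ae: "AE x in F. norm (f x) \<le> 1" using b by simp
  show ?thesis by (rule integrable_const_bound[OF ae m])
qed



lemma P_AE:
  assumes F: "F \<in> P_mG Td Ta X m G"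
  shows "AE x in F. x \<in> Td \<times> X"
proof -
  interpret prob_space F using P_basic[OF F] by simp
  have "prob (Td \<times> X) = 1" using P_basic(4)[OF F] by (simp add: measure_def)
  then show ?thesis by (rule AE_prob_1)
qed

lemma sandwich:
  assumes F: "F \<in> P_mG Td Ta {Xmin..Xmax} m G" and G: "0 \<le> G" and X: "Xmin \<le> Xmax"
    and Td: "closed Td" "Td \<subseteq> {0..Tmax}" and T: "0 \<le> Tmax"
    and c: "continuous_on UNIV c" and d: "0 < d"
  shows "measure F (Qset Td {Xmin..Xmax} s c) \<le> integral\<^sup>L F (fplusQ d s c)"
    "integral\<^sup>L F (fminusQ d s c) \<le> measure F (Qset Td {Xmin..Xmax} s c)"
    "integral\<^sup>L F (fplusQ d s c) \<le> integral\<^sup>L F (fminusQ d s c) + G * ((2*d) * (Xmax - Xmin) + Tmax * (4*d))"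
proof -
  interpret prob_space F using P_basic[OF F] by simp
  let ?X = "{Xmin..Xmax}"
  let ?Q = "Qset Td ?X s c"
  have sp: "space F = UNIV" using P_basic[OF F] by simp
  have sF: "sets F = sets borel" using P_basic[OF F] by simp
  have Qb: "?Q \<in> sets borel" using Q_borel[OF Td(1) _ c] by auto
  have Qe: "?Q \<in> events" using Qb sF by simp
  have ip: "integrable F (fplusQ d s c)" and im: "integrable F (fminusQ d s c)"
    using P_integrable[OF F] fpm_cont[OF c] fpm_bounds by auto
  have iQ: "integrable F (indicator ?Q :: _ \<Rightarrow> real)"
    using Qe by (intro integrable_real_indicator) (auto simp: less_top[symmetric])
  have mQ: "measure F ?Q = integral\<^sup>L F (indicator ?Q)" using sp by simp
  show "measure F ?Q \<le> integral\<^sup>L F (fplusQ d s c)"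
    unfolding mQ
  proof (rule integral_mono[OF iQ ip])
    fix x :: "real \<times> real"
    show "indicator ?Q x \<le> fplusQ d s c x"
    proof (cases "x \<in> ?Q")
      case True
      obtain \<tau> \<xi> where x: "x = (\<tau>, \<xi>)" by (cases x)
      with True have "\<tau> \<le> s" "c \<tau> < \<xi>" unfolding Qset_def by auto
      then have "rampf d (s + d - \<tau>) = 1" "rampf d (\<xi> - c \<tau> + d) = 1"
        using d by (auto intro!: rampf_1)
      then show ?thesis using True x by (simp add: fplusQ_def)
    next
      case False then show ?thesis using fpm_bounds(3)[of d s c x] by simp
    qed
  qed
  show "integral\<^sup>L F (fminusQ d s c) \<le> measure F ?Q"
    unfolding mQ
  proof (rule integral_mono_AE[OF im iQ])
    show "AE x in F. fminusQ d s c x \<le> indicator ?Q x"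
      using P_AE[OF F]
    proof eventually_elim
      fix x :: "real \<times> real" assume xD: "x \<in> Td \<times> ?X"
      show "fminusQ d s c x \<le> indicator ?Q x"
      proof (cases "x \<in> ?Q")
        case True
        then show ?thesis using fpm_bounds(2)[of d s c x] by simp
      next
        case False
        obtain \<tau> \<xi> where x: "x = (\<tau>, \<xi>)" by (cases x)
        with xD Td have "\<tau> \<ge> 0" by auto
        with False xD x have "s < \<tau> \<or> \<xi> \<le> c \<tau>" unfolding Qset_def by auto
        then have "rampf d (s - \<tau>) = 0 \<or> rampf d (\<xi> - c \<tau> - d) = 0"
          using d by (auto intro!: rampf_0)
        then show ?thesis using False x by (auto simp: fminusQ_def)
      qed
    qed
  qed
  define W1 where "W1 = {x::real\<times>real. s - d < fst x \<and> fst x < s + d}"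
  define W2 where "W2 = {x::real\<times>real. \<bar>snd x - c (fst x)\<bar> < 2*d}"
  have oW1: "open W1" unfolding W1_def
    by (intro open_Collect_conj open_Collect_less continuous_intros)
  have oW2: "open W2" unfolding W2_def
    by (intro open_Collect_less continuous_intros continuous_on_compose2[OF c]) auto
  have Db: "Td \<times> ?X \<in> sets borel" using Td by (intro borel_closed closed_Times) auto
  have W1b: "W1 \<inter> (Td \<times> ?X) \<in> sets borel" using oW1 Db by auto
  have W2b: "W2 \<inter> (Td \<times> ?X) \<in> sets borel" using oW2 Db by auto
  have Wb: "W1 \<union> W2 \<in> sets borel" using oW1 oW2 by auto
  have iW: "integrable F (indicator (W1 \<union> W2) :: _ \<Rightarrow> real)"
    using Wb sF by (intro integrable_real_indicator) (auto simp: less_top[symmetric])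
  have "integral\<^sup>L F (fplusQ d s c) - integral\<^sup>L F (fminusQ d s c)
      = integral\<^sup>L F (\<lambda>x. fplusQ d s c x - fminusQ d s c x)" using ip im by simp
  also have "\<dots> \<le> integral\<^sup>L F (indicator (W1 \<union> W2))"
  proof (rule integral_mono[OF _ iW])
    show "integrable F (\<lambda>x. fplusQ d s c x - fminusQ d s c x)" using ip im by simp
    fix x :: "real \<times> real"
    show "fplusQ d s c x - fminusQ d s c x \<le> indicator (W1 \<union> W2) x"
    proof (cases "x \<in> W1 \<union> W2")
      case True
      then show ?thesis using fpm_bounds(1,4)[of d s c x] by auto
    next
      case False
      obtain \<tau> \<xi> where x: "x = (\<tau>, \<xi>)" by (cases x)
      from False x have A: "\<tau> \<le> s - d \<or> s + d \<le> \<tau>" and B: "2*d \<le> \<bar>\<xi> - c \<tau>\<bar>"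
        unfolding W1_def W2_def by auto
      have "fplusQ d s c x \<le> fminusQ d s c x"
      proof (cases "s + d \<le> \<tau>")
        case True
        then have "rampf d (s + d - \<tau>) = 0" using d by (intro rampf_0) auto
        then show ?thesis using fpm_bounds(4)[of d s c x] x by (simp add: fplusQ_def)
      next
        case False
        then have t: "\<tau> \<le> s - d" using A by auto
        then have r1: "rampf d (s + d - \<tau>) = 1" "rampf d (s - \<tau>) = 1" using d by (auto intro!: rampf_1)
        show ?thesis
        proof (cases "\<xi> - c \<tau> \<ge> 2*d")
          case True
          then have "rampf d (\<xi> - c \<tau> + d) = 1" "rampf d (\<xi> - c \<tau> - d) = 1"
            using d by (auto intro!: rampf_1)
          then show ?thesis using r1 x by (simp add: fplusQ_def fminusQ_def)
        next
          case False
          then have "\<xi> - c \<tau> \<le> - 2*d" using B by auto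
          then have "rampf d (\<xi> - c \<tau> + d) = 0" using d by (intro rampf_0) auto
          then show ?thesis using fpm_bounds(4)[of d s c x] x by (simp add: fplusQ_def)
        qed
      qed
      then show ?thesis using False by simp
    qed
  qed
  also have "\<dots> = measure F (W1 \<union> W2)" using sp by simp
  also have "\<dots> = measure F ((W1 \<union> W2) \<inter> (Td \<times> ?X))"
    by (rule P_restrict[OF F Db Wb])
  also have "\<dots> = measure F ((W1 \<inter> (Td \<times> ?X)) \<union> (W2 \<inter> (Td \<times> ?X)))"
    by (simp add: Int_Un_distrib2)
  also have "\<dots> \<le> measure F (W1 \<inter> (Td \<times> ?X)) + measure F (W2 \<inter> (Td \<times> ?X))"
    by (rule measure_subadditive) (use W1b W2b sF in auto)
  also have "measure F (W1 \<inter> (Td \<times> ?X)) \<le> G * (((s + d) - (s - d)) * (Xmax - Xmin))"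
  proof (rule P_bound[OF F G W1b])
    show "W1 \<inter> (Td \<times> ?X) \<subseteq> {s - d..s + d} \<times> UNIV" unfolding W1_def by auto
    fix \<tau>
    show "\<exists>l. {\<xi>. (\<tau>, \<xi>) \<in> W1 \<inter> (Td \<times> ?X)} \<subseteq> {l..l + (Xmax - Xmin)}"
      by (rule exI[of _ Xmin]) auto
  qed (use d X in auto)
  also have "measure F (W2 \<inter> (Td \<times> ?X)) \<le> G * ((Tmax - 0) * (4*d))"
  proof (rule P_bound[OF F G W2b])
    show "W2 \<inter> (Td \<times> ?X) \<subseteq> {0..Tmax} \<times> UNIV" using Td by auto
    fix \<tau>
    show "\<exists>l. {\<xi>. (\<tau>, \<xi>) \<in> W2 \<inter> (Td \<times> ?X)} \<subseteq> {l..l + 4*d}"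
      by (rule exI[of _ "c \<tau> - 2*d"]) (auto simp: W2_def)
  qed (use d T in auto)
  finally show "integral\<^sup>L F (fplusQ d s c) \<le> integral\<^sup>L F (fminusQ d s c) + G * ((2*d) * (Xmax - Xmin) + Tmax * (4*d))"
    by (simp add: algebra_simps)
qed



lemma Q_conv:
  assumes Fk: "\<And>k. Fs k \<in> P_mG Td Ta {Xmin..Xmax} m G" and F: "F \<in> P_mG Td Ta {Xmin..Xmax} m G"
    and wc: "weak_conv_plane Fs F" and G: "0 \<le> G" and X: "Xmin \<le> Xmax"
    and Td: "closed Td" "Td \<subseteq> {0..Tmax}" and T: "0 \<le> Tmax"
    and c: "continuous_on UNIV c"
  shows "(\<lambda>k. measure (Fs k) (Qset Td {Xmin..Xmax} s c)) \<longlonglongrightarrow> measure F (Qset Td {Xmin..Xmax} s c)"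
proof (rule tendstoI)
  fix e :: real assume e: "0 < e"
  let ?Q = "Qset Td {Xmin..Xmax} s c"
  define K where "K = G * (2 * (Xmax - Xmin) + 4 * Tmax)"
  have K: "0 \<le> K" unfolding K_def using G X T by auto
  define d where "d = e / (4 * (K + 1))"
  have d: "0 < d" unfolding d_def using e K by auto
  have eta: "G * ((2*d) * (Xmax - Xmin) + Tmax * (4*d)) \<le> e / 4"
  proof -
    have "G * ((2*d) * (Xmax - Xmin) + Tmax * (4*d)) = d * K" unfolding K_def by (simp add: algebra_simps)
    also have "\<dots> \<le> d * (K + 1)" using d by simp
    also have "\<dots> = e / 4" unfolding d_def using K by (simp add: field_simps)
    finally show ?thesis .
  qed
  have bd: "\<And>f. (\<And>x. \<bar>f x\<bar> \<le> (1::real)) \<Longrightarrow> bounded (range f)"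
    by (auto simp: bounded_iff intro!: exI[of _ 1])
  have cp: "(\<lambda>k. integral\<^sup>L (Fs k) (fplusQ d s c)) \<longlonglongrightarrow> integral\<^sup>L F (fplusQ d s c)"
    using wc fpm_cont[OF c] bd[of "fplusQ d s c", OF fpm_bounds(1)] unfolding weak_conv_plane_def by blast
  have cm: "(\<lambda>k. integral\<^sup>L (Fs k) (fminusQ d s c)) \<longlonglongrightarrow> integral\<^sup>L F (fminusQ d s c)"
    using wc fpm_cont[OF c] bd[of "fminusQ d s c", OF fpm_bounds(2)] unfolding weak_conv_plane_def by blast
  have e2: "0 < e / 2" using e by simp
  from tendstoD[OF cp e2] tendstoD[OF cm e2]
  show "\<forall>\<^sub>F k in sequentially. dist (measure (Fs k) ?Q) (measure F ?Q) < e"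
  proof eventually_elim
    case (elim k)
    note sk = sandwich[OF Fk[of k] G X Td T c d, of s]
    note sF = sandwich[OF F G X Td T c d, of s]
    from elim have a: "\<bar>integral\<^sup>L (Fs k) (fplusQ d s c) - integral\<^sup>L F (fplusQ d s c)\<bar> < e/2"
      and b: "\<bar>integral\<^sup>L (Fs k) (fminusQ d s c) - integral\<^sup>L F (fminusQ d s c)\<bar> < e/2"
      by (simp_all add: dist_real_def)
    have a': "integral\<^sup>L (Fs k) (fplusQ d s c) < integral\<^sup>L F (fplusQ d s c) + e/2" using a by linarith
    have b': "integral\<^sup>L (Fs k) (fminusQ d s c) > integral\<^sup>L F (fminusQ d s c) - e/2" using b by linarith
    show ?case unfolding dist_real_def abs_less_iff using sk sF a' b' eta by linarith
  qed
qed



definition zc :: "real \<Rightarrow> (real \<Rightarrow> real) \<Rightarrow> real \<Rightarrow> real"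
  where "zc Tmax z = (\<lambda>\<tau>. z (max 0 (min Tmax \<tau>)))"

lemma zc_cont:
  assumes "continuous_on {0..Tmax} z" "0 \<le> Tmax"
  shows "continuous_on UNIV (zc Tmax z)"
  unfolding zc_def
  by (rule continuous_on_compose2[OF assms(1)]) (use assms(2) in \<open>auto intro!: continuous_intros\<close>)

lemma zc_eq: "\<tau> \<in> {0..Tmax} \<Longrightarrow> zc Tmax z \<tau> = z \<tau>" unfolding zc_def by auto

lemma S_eq_Q:
  assumes "Td \<subseteq> {0..Tmax}" "s \<le> Tmax"
  shows "S_set Td X s z = Qset Td X s (\<lambda>\<tau>. z s - zc Tmax z \<tau>)"
  unfolding S_set_def Qset_def using assms by (auto simp: zc_eq)

lemma phi_bound:
  assumes F: "F \<in> P_mG Td Ta {Xmin..Xmax} m G" and G: "0 \<le> G" and X: "Xmin \<le> Xmax"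
    and Td: "closed Td" "Td \<subseteq> {0..Tmax}"
    and z: "continuous_on {0..Tmax} z" and s: "s \<in> {0..Tmax}" "s' \<in> {0..Tmax}"
  shows "\<bar>measure F (S_set Td {Xmin..Xmax} s' z) - measure F (S_set Td {Xmin..Xmax} s z)\<bar>
     \<le> G * (Tmax * \<bar>z s' - z s\<bar>) + G * (\<bar>s' - s\<bar> * (Xmax - Xmin))"
proof -
  have T: "0 \<le> Tmax" using s by auto
  let ?X = "{Xmin..Xmax}"
  let ?c = "\<lambda>s \<tau>. z s - zc Tmax z \<tau>"
  have cc: "\<And>s. continuous_on UNIV (?c s)"
    by (intro continuous_intros zc_cont[OF z T])
  have e1: "S_set Td ?X s' z = Qset Td ?X s' (?c s')" and e2: "S_set Td ?X s z = Qset Td ?X s (?c s)"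
    using S_eq_Q[OF Td(2)] s by auto
  have l1: "\<bar>measure F (Qset Td ?X s' (?c s')) - measure F (Qset Td ?X s' (?c s))\<bar> \<le> G * (s' * \<bar>z s' - z s\<bar>)"
    by (rule Q_lip[OF F G Td(1) _ cc cc]) (use s in auto)
  also have "\<dots> \<le> G * (Tmax * \<bar>z s' - z s\<bar>)"
    using s G by (intro mult_left_mono mult_right_mono) auto
  finally have l1': "\<bar>measure F (Qset Td ?X s' (?c s')) - measure F (Qset Td ?X s' (?c s))\<bar> \<le> G * (Tmax * \<bar>z s' - z s\<bar>)" .
  have l2: "\<bar>measure F (Qset Td ?X s' (?c s)) - measure F (Qset Td ?X s (?c s))\<bar> \<le> G * (\<bar>s' - s\<bar> * (Xmax - Xmin))"
  proof (cases "s \<le> s'")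
    case True
    then show ?thesis using Q_mono_s[OF F G X Td(1) cc, of s s' s] s by auto
  next
    case False
    then show ?thesis using Q_mono_s[OF F G X Td(1) cc, of s' s s] s by auto
  qed
  show ?thesis unfolding e1 e2 using l1' l2 by linarith
qed

lemma phi_cont:
  assumes F: "F \<in> P_mG Td Ta {Xmin..Xmax} m G" and G: "0 \<le> G" and X: "Xmin \<le> Xmax"
    and Td: "closed Td" "Td \<subseteq> {0..Tmax}"
    and z: "continuous_on {0..Tmax} z"
  shows "continuous_on {0..Tmax} (\<lambda>s. measure F (S_set Td {Xmin..Xmax} s z))"
  unfolding continuous_on_def
proof (intro ballI)
  fix s0 assume s0: "s0 \<in> {0..Tmax}"
  let ?phi = "\<lambda>s. measure F (S_set Td {Xmin..Xmax} s z)"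
  let ?B = "\<lambda>s. G * (Tmax * \<bar>z s - z s0\<bar>) + G * (\<bar>s - s0\<bar> * (Xmax - Xmin))"
  have zt: "(z \<longlongrightarrow> z s0) (at s0 within {0..Tmax})" using z s0 unfolding continuous_on_def by auto
  have "(?B \<longlongrightarrow> G * (Tmax * \<bar>z s0 - z s0\<bar>) + G * (\<bar>s0 - s0\<bar> * (Xmax - Xmin))) (at s0 within {0..Tmax})"
    by (intro tendsto_intros zt)
  then have B0: "(?B \<longlongrightarrow> 0) (at s0 within {0..Tmax})" by simp
  have "((\<lambda>s. ?phi s - ?phi s0) \<longlongrightarrow> 0) (at s0 within {0..Tmax})"
  proof (rule Lim_null_comparison[OF _ B0])
    show "\<forall>\<^sub>F s in at s0 within {0..Tmax}. norm (?phi s - ?phi s0) \<le> ?B s"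
      unfolding eventually_at_filter
      by (rule always_eventually) (use phi_bound[OF F G X Td z s0] in auto)
  qed
  then show "(?phi \<longlongrightarrow> ?phi s0) (at s0 within {0..Tmax})"
    by (simp add: LIM_zero_iff)
qed



lemma P_meas_bounds:
  assumes F: "F \<in> P_mG Td Ta X m G"
  shows "0 \<le> measure F A" "measure F A \<le> 1"
proof -
  interpret prob_space F using P_basic[OF F] by simp
  show "0 \<le> measure F A" by simp
  show "measure F A \<le> 1" by simp
qed

lemma E_conv:
  assumes Fk: "\<And>k. Fs k \<in> P_mG Td Ta {Xmin..Xmax} m G" and F: "F \<in> P_mG Td Ta {Xmin..Xmax} m G"
    and wc: "weak_conv_plane Fs F" and G: "0 \<le> G" and X: "Xmin \<le> Xmax"
    and Td: "closed Td" "Td \<subseteq> {0..Tmax}" and T: "0 \<le> Tmax"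
    and z: "continuous_on {0..Tmax} z"
  shows "(\<lambda>k. integral {0..Tmax} (\<lambda>s. \<bar>measure (Fs k) (S_set Td {Xmin..Xmax} s z) - measure F (S_set Td {Xmin..Xmax} s z)\<bar>)) \<longlonglongrightarrow> 0"
proof -
  let ?e = "\<lambda>k s. \<bar>measure (Fs k) (S_set Td {Xmin..Xmax} s z) - measure F (S_set Td {Xmin..Xmax} s z)\<bar>"
  have "(\<lambda>k. integral {0..Tmax} (?e k)) \<longlonglongrightarrow> integral {0..Tmax} (\<lambda>s. 0)"
  proof (rule dominated_convergence(2))
    fix k
    show "?e k integrable_on {0..Tmax}"
      by (intro integrable_continuous_interval continuous_intros phi_cont[OF Fk G X Td z] phi_cont[OF F G X Td z])
  next
    show "(\<lambda>s. 1::real) integrable_on {0..Tmax}" by (rule integrable_continuous_interval) (rule continuous_on_const)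
  next
    fix k s
    show "norm (?e k s) \<le> 1"
      using P_meas_bounds[OF Fk[of k], of "S_set Td {Xmin..Xmax} s z"] P_meas_bounds[OF F, of "S_set Td {Xmin..Xmax} s z"]
      unfolding real_norm_def abs_le_iff abs_abs by linarith
  next
    fix s :: real assume s: "s \<in> {0..Tmax}"
    let ?c = "\<lambda>\<tau>. z s - zc Tmax z \<tau>"
    have cc: "continuous_on UNIV ?c" by (intro continuous_intros zc_cont[OF z T])
    have eq: "S_set Td {Xmin..Xmax} s z = Qset Td {Xmin..Xmax} s ?c" using S_eq_Q[OF Td(2)] s by auto
    have "(\<lambda>k. \<bar>measure (Fs k) (Qset Td {Xmin..Xmax} s ?c) - measure F (Qset Td {Xmin..Xmax} s ?c)\<bar>)
       \<longlonglongrightarrow> \<bar>measure F (Qset Td {Xmin..Xmax} s ?c) - measure F (Qset Td {Xmin..Xmax} s ?c)\<bar>"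
      by (intro tendsto_intros Q_conv[OF Fk F wc G X Td T cc])
    then show "(\<lambda>k. ?e k s) \<longlonglongrightarrow> 0" unfolding eq by simp
  qed
  then show ?thesis by simp
qed



lemma exp_integral:
  fixes lam t :: real
  assumes lam: "0 < lam" and t: "0 \<le> t"
  shows "((\<lambda>s. exp (lam * s)) has_integral (exp (lam * t) / lam - 1 / lam)) {0..t}"
proof -
  have "((\<lambda>s. exp (lam * s)) has_integral (exp (lam * t) / lam - exp (lam * 0) / lam)) {0..t}"
  proof (rule fundamental_theorem_of_calculus[OF t])
    fix x :: real
    have "((\<lambda>s. exp (lam * s) / lam) has_real_derivative exp (lam * x)) (at x within {0..t})"
      using lam by (auto intro!: derivative_eq_intros)
    then show "((\<lambda>s. exp (lam * s) / lam) has_vector_derivative exp (lam * x)) (at x within {0..t})"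
      by (simp add: has_real_derivative_iff_has_vector_derivative)
  qed
  then show ?thesis by simp
qed

lemma gronwall_step:
  fixes Tmax Xmin Xmax G L :: real
  assumes Fk: "Fk \<in> P_mG Td Ta {Xmin..Xmax} m G" and F: "F \<in> P_mG Td Ta {Xmin..Xmax} m G"
    and G: "0 \<le> G" and X: "Xmin \<le> Xmax" and Td: "closed Td" "Td \<subseteq> {0..Tmax}" and T: "0 \<le> Tmax"
    and V: "L-lipschitz_on {0..} V"
    and sk: "solves_eq Tmax Td {Xmin..Xmax} V Fk zk" and sz: "solves_eq Tmax Td {Xmin..Xmax} V F z"
  shows "\<forall>t\<in>{0..Tmax}. \<bar>zk t - z t\<bar> \<le> 2 * (L * integral {0..Tmax} (\<lambda>s. \<bar>measure Fk (S_set Td {Xmin..Xmax} s z) - measure F (S_set Td {Xmin..Xmax} s z)\<bar>)) * exp ((4*L*G*Tmax + 1) * Tmax)"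
proof -
  let ?X = "{Xmin..Xmax}"
  define lam where "lam = 4*L*G*Tmax + 1"
  define e where "e = (\<lambda>s. \<bar>measure Fk (S_set Td ?X s z) - measure F (S_set Td ?X s z)\<bar>)"
  define E where "E = L * integral {0..Tmax} e"
  have L: "0 \<le> L" using V by (rule lipschitz_on_nonneg)
  have K0: "0 \<le> 2*L*G*Tmax" using L G T by simp
  have l4: "4*L*G*Tmax = 2 * (2*L*G*Tmax)" by simp
  have lam: "0 < lam" "2 * (2*L*G*Tmax) \<le> lam" unfolding lam_def using K0 l4 by linarith+
  have zkc: "continuous_on {0..Tmax} zk" and zc: "continuous_on {0..Tmax} z"
    using sk sz unfolding solves_eq_def by auto
  have ec: "continuous_on {0..Tmax} e" unfolding e_def
    by (intro continuous_intros phi_cont[OF Fk G X Td zc] phi_cont[OF F G X Td zc])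
  have e0: "\<And>s. 0 \<le> e s" unfolding e_def by simp
  have eint: "e integrable_on {0..Tmax}" by (rule integrable_continuous_interval[OF ec])
  have E0: "0 \<le> E" unfolding E_def using L e0 eint by (simp add: integral_nonneg)
  define w where "w = (\<lambda>t. \<bar>zk t - z t\<bar>)"
  define psi where "psi = (\<lambda>t. w t * exp (- (lam * t)))"
  have psic: "continuous_on {0..Tmax} psi" unfolding psi_def w_def
    by (intro continuous_intros zkc zc)
  have bdd: "bdd_above (psi ` {0..Tmax})"
    by (rule bounded_imp_bdd_above[OF compact_imp_bounded[OF compact_continuous_image[OF psic]]]) simp
  define M where "M = Sup (psi ` {0..Tmax})"
  have Mup: "\<And>\<tau>. \<tau> \<in> {0..Tmax} \<Longrightarrow> psi \<tau> \<le> M" unfolding M_def using bdd by (rule cSUP_upper2) auto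
  have M0: "0 \<le> M" using Mup[of 0] T unfolding psi_def w_def by (smt (verit) atLeastAtMost_iff exp_gt_zero mult_nonneg_nonneg abs_ge_zero)
  have wM: "w \<tau> \<le> M * exp (lam * \<tau>)" if "\<tau> \<in> {0..Tmax}" for \<tau>
  proof -
    have "w \<tau> = psi \<tau> * exp (lam * \<tau>)" unfolding psi_def by (simp add: exp_minus field_simps)
    also have "\<dots> \<le> M * exp (lam * \<tau>)" using Mup[OF that] by (intro mult_right_mono) auto
    finally show ?thesis .
  qed
  have key: "w t \<le> M / 2 * exp (lam * t) + E" if t: "t \<in> {0..Tmax}" for t
  proof -
    define gk where "gk = (\<lambda>s. V (measure Fk (S_set Td ?X s zk)))"
    define g where "g = (\<lambda>s. V (measure F (S_set Td ?X s z)))"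
    have hk: "(gk has_integral zk t) {0..t}" using sk t unfolding solves_eq_def gk_def by auto
    have hz: "(g has_integral z t) {0..t}" using sz t unfolding solves_eq_def g_def by auto
    have hd: "((\<lambda>s. gk s - g s) has_integral (zk t - z t)) {0..t}" by (rule has_integral_diff[OF hk hz])
    define h where "h = (\<lambda>s. (2*L*G*Tmax*M) * exp (lam * s) + L * e s)"
    have sub: "{0..t} \<subseteq> {0..Tmax}" using t by auto
    have eint_t: "e integrable_on {0..t}" by (rule integrable_continuous_interval[OF continuous_on_subset[OF ec sub]])
    have hint: "(h has_integral ((2*L*G*Tmax*M) * (exp (lam * t) / lam - 1 / lam) + L * integral {0..t} e)) {0..t}"
      unfolding h_def
      by (intro has_integral_add has_integral_mult_right exp_integral integrable_integral eint_t lam(1)) (use t in auto)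
    have bound: "norm (gk s - g s) \<le> h s" if s: "s \<in> {0..t}" for s
    proof -
      have s': "s \<in> {0..Tmax}" using s sub by auto
      let ?a = "measure Fk (S_set Td ?X s zk)" and ?b = "measure Fk (S_set Td ?X s z)"
        and ?c = "measure F (S_set Td ?X s z)"
      have "\<bar>gk s - g s\<bar> \<le> L * \<bar>?a - ?c\<bar>"
        using lipschitz_onD[OF V, of ?a ?c] unfolding gk_def g_def dist_real_def by simp
      also have "\<dots> \<le> L * (\<bar>?a - ?b\<bar> + e s)" unfolding e_def using L by (intro mult_left_mono) auto
      also have "\<bar>?a - ?b\<bar> \<le> G * (s * (2 * M * exp (lam * s)))"
      proof -
        let ?c1 = "\<lambda>\<tau>. zk s - zc Tmax zk \<tau>" and ?c2 = "\<lambda>\<tau>. z s - zc Tmax z \<tau>"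
        have e1: "S_set Td ?X s zk = Qset Td ?X s ?c1" and e2: "S_set Td ?X s z = Qset Td ?X s ?c2"
          using S_eq_Q[OF Td(2)] s' by auto
        have c1: "continuous_on UNIV ?c1" by (intro continuous_intros zc_cont[OF zkc T])
        have c2: "continuous_on UNIV ?c2" by (intro continuous_intros zc_cont[OF zc T])
        have "\<bar>measure Fk (Qset Td ?X s ?c1) - measure Fk (Qset Td ?X s ?c2)\<bar> \<le> G * (s * (2 * M * exp (lam * s)))"
        proof (rule Q_lip[OF Fk G Td(1) _ c1 c2])
          fix \<tau> assume tau: "\<tau> \<in> {0..s}"
          then have tau': "\<tau> \<in> {0..Tmax}" using s' by auto
          have "\<bar>?c1 \<tau> - ?c2 \<tau>\<bar> = \<bar>(zk s - z s) - (zk \<tau> - z \<tau>)\<bar>" using tau' by (simp add: zc_eq)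
          also have "\<dots> \<le> w s + w \<tau>" unfolding w_def by simp
          also have "\<dots> \<le> M * exp (lam * s) + M * exp (lam * \<tau>)" using wM[OF s'] wM[OF tau'] by simp
          also have "M * exp (lam * \<tau>) \<le> M * exp (lam * s)"
            using tau lam M0 by (intro mult_left_mono) auto
          finally show "\<bar>?c1 \<tau> - ?c2 \<tau>\<bar> \<le> 2 * M * exp (lam * s)" by simp
        qed (use s' M0 in auto)
        then show ?thesis unfolding e1 e2 .
      qed
      also have "G * (s * (2 * M * exp (lam * s))) \<le> G * (Tmax * (2 * M * exp (lam * s)))"
        using s' G M0 by (intro mult_left_mono mult_right_mono) auto
      finally have "\<bar>gk s - g s\<bar> \<le> L * (G * (Tmax * (2 * M * exp (lam * s))) + e s)"
        using L by (simp add: mult_left_mono)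
      then show ?thesis unfolding h_def by (simp add: algebra_simps)
    qed
    have "norm (integral {0..t} (\<lambda>s. gk s - g s)) \<le> integral {0..t} h"
      by (rule integral_norm_bound_integral[OF has_integral_integrable[OF hd] has_integral_integrable[OF hint] bound])
    then have w1: "w t \<le> (2*L*G*Tmax*M) * (exp (lam * t) / lam - 1 / lam) + L * integral {0..t} e"
      unfolding w_def using integral_unique[OF hd] integral_unique[OF hint] by simp
    have "(2*L*G*Tmax*M) * (exp (lam * t) / lam - 1 / lam) \<le> (2*L*G*Tmax*M) * (exp (lam * t) / lam)"
      using K0 M0 lam by (intro mult_left_mono) auto
    also have "\<dots> = ((2*L*G*Tmax) / lam) * (M * exp (lam * t))" by simp
    also have "\<dots> \<le> (1/2) * (M * exp (lam * t))"
      using lam M0 by (intro mult_right_mono) (auto simp: field_simps)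
    finally have w2: "(2*L*G*Tmax*M) * (exp (lam * t) / lam - 1 / lam) \<le> M / 2 * exp (lam * t)" by simp
    have "integral {0..t} e \<le> integral {0..Tmax} e"
      by (rule integral_subset_le[OF sub eint_t eint]) (use e0 in auto)
    then have w3: "L * integral {0..t} e \<le> E" unfolding E_def using L by (rule mult_left_mono)
    show ?thesis using w1 w2 w3 by linarith
  qed
  have psiB: "psi t \<le> M / 2 + E" if t: "t \<in> {0..Tmax}" for t
  proof -
    have ex: "exp (- (lam * t)) \<le> 1" using lam t by auto
    have "psi t \<le> (M / 2 * exp (lam * t) + E) * exp (- (lam * t))"
      unfolding psi_def by (intro mult_right_mono key[OF t]) auto
    also have "\<dots> = M / 2 + E * exp (- (lam * t))" by (simp add: algebra_simps exp_minus)
    also have "\<dots> \<le> M / 2 + E" using E0 ex by (simp add: mult_left_le)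
    finally show ?thesis .
  qed
  have "M \<le> M / 2 + E" unfolding M_def using T psiB by (intro cSUP_least) (auto simp: M_def)
  then have M2: "M \<le> 2 * E" by simp
  show ?thesis
  proof
    fix t assume t: "t \<in> {0..Tmax}"
    have "\<bar>zk t - z t\<bar> = w t" by (simp add: w_def)
    also have "\<dots> \<le> M * exp (lam * t)" by (rule wM[OF t])
    also have "\<dots> \<le> 2 * E * exp (lam * Tmax)"
      using M2 M0 t lam by (intro mult_mono) auto
    finally show "\<bar>zk t - z t\<bar> \<le> 2 * (L * integral {0..Tmax} (\<lambda>s. \<bar>measure Fk (S_set Td ?X s z) - measure F (S_set Td ?X s z)\<bar>)) * exp ((4*L*G*Tmax + 1) * Tmax)"
      unfolding E_def e_def lam_def .
  qed
qed



theorem proposition4: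
  fixes Tmax Xmin Xmax G :: real
    and Td Ta :: "real set"
    and m :: "(real \<times> real) measure"
    and V :: "real \<Rightarrow> real"
    and Fs :: "nat \<Rightarrow> (real \<times> real) measure" and F :: "(real \<times> real) measure"
    and zs :: "nat \<Rightarrow> real \<Rightarrow> real" and z :: "real \<Rightarrow> real"
  assumes "compact Td" "Td \<subseteq> {0..Tmax}" "compact Ta" "Ta \<subseteq> {0..Tmax}"
    and "0 \<le> Xmin" "Xmin < Xmax"
    and "prob_space m" "sets m = sets borel" "emeasure m ({Xmin..Xmax} \<times> Ta) = 1"
    and "G > 0"
    and "V ` {0..} \<subseteq> {0..}" "strict_antimono_on {0..} V"
    and "\<exists>L. L-lipschitz_on {0..} V"
    and "\<And>k. Fs k \<in> P_mG Td Ta {Xmin..Xmax} m G"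
    and "weak_conv_plane Fs F"
    and "F \<in> P_mG Td Ta {Xmin..Xmax} m G"
    and "\<And>k. solves_eq Tmax Td {Xmin..Xmax} V (Fs k) (zs k)"
    and "solves_eq Tmax Td {Xmin..Xmax} V F z"
  shows "uniform_limit {0..Tmax} zs z sequentially"
proof (cases "0 \<le> Tmax")
  case False
  then have "{0..Tmax} = ({} :: real set)" by auto
  then show ?thesis by (simp add: uniform_limit_iff)
next
  case T: True
  have Td: "closed Td" "Td \<subseteq> {0..Tmax}" using assms(1,2) by (auto intro: compact_imp_closed)
  have G: "0 \<le> G" using assms(10) by simp
  have X: "Xmin \<le> Xmax" using assms(6) by simp
  obtain L where V: "L-lipschitz_on {0..} V" using assms(13) by blast
  have zc: "continuous_on {0..Tmax} z" using assms(18) unfolding solves_eq_def by auto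
  define I where "I = (\<lambda>k. integral {0..Tmax} (\<lambda>s. \<bar>measure (Fs k) (S_set Td {Xmin..Xmax} s z) - measure F (S_set Td {Xmin..Xmax} s z)\<bar>))"
  define C where "C = exp ((4*L*G*Tmax + 1) * Tmax)"
  have I0: "I \<longlonglongrightarrow> 0" unfolding I_def
    by (rule E_conv[OF assms(14) assms(16) assms(15) G X Td T zc])
  have B0: "(\<lambda>k. 2 * (L * I k) * C) \<longlonglongrightarrow> 2 * (L * 0) * C"
    by (intro tendsto_intros I0)
  have bnd: "\<forall>t\<in>{0..Tmax}. \<bar>zs k t - z t\<bar> \<le> 2 * (L * I k) * C" for k
    unfolding I_def C_def
    by (rule gronwall_step[OF assms(14) assms(16) G X Td T V assms(17) assms(18)])
  show ?thesis
  proof (rule uniform_limitI)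
    fix e :: real assume e: "0 < e"
    have "\<forall>\<^sub>F k in sequentially. 2 * (L * I k) * C < e"
      using order_tendstoD(2)[OF B0] e by simp
    then show "\<forall>\<^sub>F k in sequentially. \<forall>t\<in>{0..Tmax}. dist (zs k t) (z t) < e"
    proof eventually_elim
      case (elim k)
      then show ?case using bnd[of k] by (auto simp: dist_real_def intro: le_less_trans)
    qed
  qed
qed

end
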